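(* Let $X$ be an $n$-dimensional projective space over a field, $K$ a $k$-dimensional subspace of $X$, and let $s_1,s_2,t_1,t_2$ be integers with $-1\le t_1\le s_1\le\dim K$ and $-1\le t_2\le s_2\le\dim(X/K)$. Put $t:=t_1+t_2+1$ and $s:=s_1+s_2+1$. If $\mathcal B_K\subseteq\mathrm{Gr}_{t_1}(K)$ blocks $\mathcal S_K\subseteq\mathrm{Gr}_{s_1}(K)$ and $\mathcal B_{X/K}\subseteq\mathrm{Gr}_{t_2}(X/K)$ blocks $\mathcal S_{X/K}\subseteq\mathrm{Gr}_{s_2}(X/K)$, then $\mathcal B\subseteq\mathrm{Gr}_t(X)$ blocks $\mathcal S\subseteq\mathrm{Gr}_s(X)$, where $$\mathcal B:=\{T\in\mathrm{Gr}(X): K\cap T\in\mathcal B_K,\ \langle K,T\rangle\in\mathcal B_{X/K}\},\qquad \mathcal S:=\{S\in\mathrm{Gr}(X):K\cap S\in\mathcal S_K,\ \langle K,S\rangle\in\mathcal S_{X/K}\}.$$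
   Context: Projective dimension is used (the empty subspace has dimension $-1$). $\mathrm{Gr}_d(Y)$ denotes the set of $d$-dimensional subspaces of a projective space $Y$ and $\mathrm{Gr}(Y)$ the set of all subspaces. For a $k$-dimensional subspace $K$ of $X$, the quotient space $X/K$ is the projective space of dimension $\dim X-k-1$ whose $r$-dimensional subspaces are the $(r+k+1)$-dimensional subspaces of $X$ containing $K$ (its $(-1)$-dimensional subspace is $K$); the span $\langle K,T\rangle$ is regarded as an element of $X/K$, and containment in $X/K$ is containment in $X$. For $t\le s$, a set $\mathcal B$ of $t$-dimensional subspaces of a projective space is said to block a set $\mathcal S$ of $s$-dimensional subspaces (or be a partial blocking set for $\mathcal S$) if every $S\in\mathcal S$ contains some $T\in\mathcal B$. *)

theory Defs
  imports Complex_Main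
begin

text \<open>Projective geometry of a (finite-dimensional) vector space V over a field:
 projective subspaces are linear subspaces of V, projective dimension = vector dimension - 1.\<close>

definition pdim :: "('a::field \<Rightarrow> 'v::ab_group_add \<Rightarrow> 'v) \<Rightarrow> 'v set \<Rightarrow> int" where
  "pdim scale W = int (vector_space.dim scale W) - 1"

definition Gr :: "('a::field \<Rightarrow> 'v::ab_group_add \<Rightarrow> 'v) \<Rightarrow> int \<Rightarrow> 'v set \<Rightarrow> 'v set set" where
  "Gr scale d Y = {W. module.subspace scale W \<and> W \<subseteq> Y \<and> pdim scale W = d}"

definition Gr_all :: "('a::field \<Rightarrow> 'v::ab_group_add \<Rightarrow> 'v) \<Rightarrow> 'v set \<Rightarrow> 'v set set" where
  "Gr_all scale Y = {W. module.subspace scale W \<and> W \<subseteq> Y}"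

text \<open>Gr_r(X/K): the r-dimensional subspaces of the quotient X/K, i.e. the
 (r + dim K + 1)-dimensional subspaces of X containing K.\<close>
definition Gr_quot :: "('a::field \<Rightarrow> 'v::ab_group_add \<Rightarrow> 'v) \<Rightarrow> int \<Rightarrow> 'v set \<Rightarrow> 'v set \<Rightarrow> 'v set set" where
  "Gr_quot scale r X K = {W. module.subspace scale W \<and> K \<subseteq> W \<and> W \<subseteq> X
      \<and> pdim scale W = r + pdim scale K + 1}"

definition join :: "('a::field \<Rightarrow> 'v::ab_group_add \<Rightarrow> 'v) \<Rightarrow> 'v set \<Rightarrow> 'v set \<Rightarrow> 'v set" where
  "join scale K T = module.span scale (K \<union> T)"

definition blocks :: "'v set set \<Rightarrow> 'v set set \<Rightarrow> bool" where
  "blocks \<B> \<S> \<longleftrightarrow> (\<forall>S\<in>\<S>. \<exists>T\<in>\<B>. T \<subseteq> S)"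

end

theory Submission
  imports Defs
begin

context finite_dimensional_vector_space begin

lemma gr_L1:
  assumes "subspace A" "subspace B"
  shows "dim (span (A \<union> B)) + dim (A \<inter> B) = dim A + dim B"
proof -
  have eqs: "span A = A" "span B = B" using assms by (simp_all add: span_eq_iff)
  have "span (A \<union> B) = {x + y |x y. x \<in> A \<and> y \<in> B}"
    using span_Un[of A B, unfolded eqs] .
  then show ?thesis using dim_sums_Int[OF assms] by simp
qed

lemma gr_L2:
  assumes "subspace K" "subspace W" "subspace S" "K \<subseteq> W" "W \<subseteq> span (K \<union> S)"
  shows "span (K \<union> (W \<inter> S)) = W"
proof
  show "span (K \<union> (W \<inter> S)) \<subseteq> W"
    using assms by (intro span_minimal) auto
  show "W \<subseteq> span (K \<union> (W \<inter> S))"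
  proof
    fix w assume w: "w \<in> W"
    then have "w \<in> span (K \<union> S)" using assms by auto
    have eqs: "span K = K" "span S = S" using assms by (simp_all add: span_eq_iff)
    obtain a b where ab: "w = a + b" "a \<in> K" "b \<in> S"
      using span_Un[of K S, unfolded eqs] \<open>w \<in> span (K \<union> S)\<close> by blast
    have "b = w - a" using ab by simp
    then have "b \<in> W" using w ab assms by (metis subsetD subspace_diff)
    then show "w \<in> span (K \<union> (W \<inter> S))"
      using ab by (metis IntI UnI1 UnI2 span_add span_base)
  qed
qed

lemma dim0:
  assumes "dim A = 0" shows "A \<subseteq> {0}"
proof -
  obtain B where "B \<subseteq> A" "independent B" "A \<subseteq> span B" "card B = dim A"
    using basis_exists by blast
  then have "B = {}" using assms finiteI_independent by auto
  then show ?thesis using \<open>A \<subseteq> span B\<close> by simp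
qed

lemma gr_L3:
  assumes "subspace A" "subspace U" "A \<subseteq> U"
  shows "\<exists>C. subspace C \<and> C \<subseteq> U \<and> A \<inter> C \<subseteq> {0} \<and> span (A \<union> C) = U"
proof -
  obtain B where B: "B \<subseteq> A" "independent B" "A \<subseteq> span B" "card B = dim A"
    using basis_exists by blast
  obtain D where D: "B \<subseteq> D" "D \<subseteq> U" "independent D" "U \<subseteq> span D"
    using maximal_independent_subset_extend[of B U] B assms by blast
  define C where "C = span (D - B)"
  have fin: "finite D" using D finiteI_independent by blast
  have sC: "subspace C" unfolding C_def by simp
  have CU: "C \<subseteq> U" unfolding C_def using D assms by (intro span_minimal) auto
  have spAC: "span (A \<union> C) = U"
  proof
    show "span (A \<union> C) \<subseteq> U" using CU assms by (intro span_minimal) auto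
    have "D \<subseteq> A \<union> C" using B unfolding C_def by (auto intro: span_base)
    then show "U \<subseteq> span (A \<union> C)" using D span_mono by blast
  qed
  have dA: "dim A = card B" using B by simp
  have dC: "dim C = card (D - B)" unfolding C_def
    using D independent_mono[of D "D - B"] dim_eq_card_independent by simp
  have dU: "dim U = card D"
    using D dim_eq_card_independent
    by (metis dim_span span_minimal assms(2) subset_antisym)
  have "card D = card B + card (D - B)"
    using fin B D by (metis card_Diff_subset card_mono finite_subset le_add_diff_inverse)
  then have "dim (A \<inter> C) = 0"
    using gr_L1[OF assms(1) sC] spAC dA dC dU by simp
  then show ?thesis using sC CU spAC dim0 by blast
qed

end

theorem lemma3p5:
  fixes scale :: "'a::field \<Rightarrow> 'v::ab_group_add \<Rightarrow> 'v"
    and Basis :: "'v set"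
    and n k s1 s2 t1 t2 :: int
    and K :: "'v set"
    and BK SK BXK SXK :: "'v set set"
  assumes fdvs: "finite_dimensional_vector_space scale Basis"
    and dimX: "pdim scale UNIV = n"
    and K: "K \<in> Gr scale k UNIV"
    and t1: "-1 \<le> t1" "t1 \<le> s1" "s1 \<le> k"
    and t2: "-1 \<le> t2" "t2 \<le> s2" "s2 \<le> n - k - 1"
    and BK: "BK \<subseteq> Gr scale t1 K" and SK: "SK \<subseteq> Gr scale s1 K"
    and BXK: "BXK \<subseteq> Gr_quot scale t2 UNIV K" and SXK: "SXK \<subseteq> Gr_quot scale s2 UNIV K"
    and blK: "blocks BK SK" and blXK: "blocks BXK SXK"
  shows "let t = t1 + t2 + 1; s = s1 + s2 + 1;
             \<B> = {T \<in> Gr_all scale UNIV. K \<inter> T \<in> BK \<and> join scale K T \<in> BXK};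
             \<S> = {S \<in> Gr_all scale UNIV. K \<inter> S \<in> SK \<and> join scale K S \<in> SXK}
         in \<B> \<subseteq> Gr scale t UNIV \<and> \<S> \<subseteq> Gr scale s UNIV \<and> blocks \<B> \<S>"
proof -
  interpret V: finite_dimensional_vector_space scale Basis by (rule fdvs)
  define \<B> where "\<B> = {T \<in> Gr_all scale UNIV. K \<inter> T \<in> BK \<and> join scale K T \<in> BXK}"
  define \<S> where "\<S> = {S \<in> Gr_all scale UNIV. K \<inter> S \<in> SK \<and> join scale K S \<in> SXK}"
  have sK: "V.subspace K" and dK: "int (V.dim K) = k + 1"
    using K by (auto simp: Gr_def pdim_def)
  have dimgen: "pdim scale T = a + b + 1"
    if T: "V.subspace T" and i: "pdim scale (K \<inter> T) = a"
      and j: "pdim scale (join scale K T) = b + pdim scale K + 1" for T a b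
  proof -
    have "V.dim (V.span (K \<union> T)) + V.dim (K \<inter> T) = V.dim K + V.dim T"
      by (rule V.gr_L1[OF sK T])
    then show ?thesis using i j dK unfolding pdim_def join_def by linarith
  qed
  have B1: "\<B> \<subseteq> Gr scale (t1 + t2 + 1) UNIV"
  proof
    fix T assume "T \<in> \<B>"
    then have T: "V.subspace T" "K \<inter> T \<in> BK" "join scale K T \<in> BXK"
      by (auto simp: \<B>_def Gr_all_def)
    have "pdim scale (K \<inter> T) = t1" using T BK by (auto simp: Gr_def)
    moreover have "pdim scale (join scale K T) = t2 + pdim scale K + 1"
      using T BXK by (auto simp: Gr_quot_def)
    ultimately show "T \<in> Gr scale (t1 + t2 + 1) UNIV"
      using dimgen T by (auto simp: Gr_def)
  qed
  have S1: "\<S> \<subseteq> Gr scale (s1 + s2 + 1) UNIV"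
  proof
    fix T assume "T \<in> \<S>"
    then have T: "V.subspace T" "K \<inter> T \<in> SK" "join scale K T \<in> SXK"
      by (auto simp: \<S>_def Gr_all_def)
    have "pdim scale (K \<inter> T) = s1" using T SK by (auto simp: Gr_def)
    moreover have "pdim scale (join scale K T) = s2 + pdim scale K + 1"
      using T SXK by (auto simp: Gr_quot_def)
    ultimately show "T \<in> Gr scale (s1 + s2 + 1) UNIV"
      using dimgen T by (auto simp: Gr_def)
  qed
  have bl: "blocks \<B> \<S>"
    unfolding blocks_def
  proof
    fix S assume "S \<in> \<S>"
    then have S: "V.subspace S" "K \<inter> S \<in> SK" "join scale K S \<in> SXK"
      by (auto simp: \<S>_def Gr_all_def)
    obtain T1 where T1: "T1 \<in> BK" "T1 \<subseteq> K \<inter> S" using blK S unfolding blocks_def by blast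
    obtain W where W: "W \<in> BXK" "W \<subseteq> join scale K S" using blXK S unfolding blocks_def by blast
    have sT1: "V.subspace T1" using T1 BK by (auto simp: Gr_def)
    have sW: "V.subspace W" "K \<subseteq> W" using W BXK by (auto simp: Gr_quot_def)
    define U where "U = W \<inter> S"
    have sU: "V.subspace U" unfolding U_def using sW S V.subspace_inter by blast
    have sP: "V.subspace (K \<inter> S)" using sK S V.subspace_inter by blast
    have WU: "V.span (K \<union> U) = W" unfolding U_def
      using V.gr_L2[OF sK sW(1) S(1) sW(2)] W(2) by (simp add: join_def)
    have PU: "K \<inter> S \<subseteq> U" using sW unfolding U_def by auto
    obtain C where C: "V.subspace C" "C \<subseteq> U" "(K \<inter> S) \<inter> C \<subseteq> {0}" "V.span ((K \<inter> S) \<union> C) = U"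
      using V.gr_L3[OF sP sU PU] by blast
    define T where "T = V.span (T1 \<union> C)"
    have sT: "V.subspace T" unfolding T_def by simp
    have eqT1: "V.span T1 = T1" "V.span C = C" using sT1 C(1) by (simp_all add: V.span_eq_iff)
    have Tsum: "T = {x + y |x y. x \<in> T1 \<and> y \<in> C}"
      unfolding T_def using V.span_Un[of T1 C, unfolded eqT1] .
    have KT: "K \<inter> T = T1"
    proof
      show "T1 \<subseteq> K \<inter> T" using T1 unfolding T_def by (auto intro: V.span_base)
      show "K \<inter> T \<subseteq> T1"
      proof
        fix x assume x: "x \<in> K \<inter> T"
        then obtain a c where ac: "x = a + c" "a \<in> T1" "c \<in> C" using Tsum by blast
        have "c = x - a" using ac by simp
        then have "c \<in> K" using x ac T1 sK by (metis IntD1 subsetD V.subspace_diff)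
        moreover have "c \<in> S" using ac C(2) unfolding U_def by auto
        ultimately have "c = 0" using C(3) ac by auto
        then show "x \<in> T1" using ac by simp
      qed
    qed
    have TS: "T \<subseteq> S" unfolding T_def using T1 C(2) S(1) unfolding U_def
      by (intro V.span_minimal) auto
    have JT: "join scale K T = W"
    proof
      have "T \<subseteq> W" unfolding T_def using sW T1 C(2) unfolding U_def
        by (intro V.span_minimal) auto
      then show "join scale K T \<subseteq> W" unfolding join_def
        using sW by (intro V.span_minimal) auto
      have "U \<subseteq> V.span (K \<union> T)"
      proof -
        have "K \<inter> S \<union> C \<subseteq> V.span (K \<union> T)"
          unfolding T_def by (auto intro: V.span_base)
        then have "V.span ((K \<inter> S) \<union> C) \<subseteq> V.span (K \<union> T)"
          by (simp add: V.span_minimal)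
        then show ?thesis using C(4) by simp
      qed
      then have "K \<union> U \<subseteq> V.span (K \<union> T)" by (auto intro: V.span_base)
      then have "V.span (K \<union> U) \<subseteq> V.span (K \<union> T)" by (simp add: V.span_minimal)
      then show "W \<subseteq> join scale K T" using WU by (simp add: join_def)
    qed
    have "T \<in> \<B>" unfolding \<B>_def Gr_all_def using sT KT JT T1 W by auto
    then show "\<exists>T\<in>\<B>. T \<subseteq> S" using TS by blast
  qed
  show ?thesis unfolding Let_def \<B>_def[symmetric] \<S>_def[symmetric] using B1 S1 bl by blast
qed

end
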